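(* For every Tychonoff space $X$, the following are equivalent: (1) $C_p(X)\models S_{fin}(\Gamma_f,\Omega_f)$ for every $f\in C_p(X)$; (2) $X\models S_{fin}(\Gamma_F,\Omega)$.
   Context: All spaces are Tychonoff; $C_p(X)$ is $C(X)$ with pointwise convergence topology. For $y$ in a space $Y$: $\Omega_y=\{A\subseteq Y: y\in\overline A\setminus A\}$, $\Gamma_y=\{A\subseteq Y: A$ infinite, $y\notin A$, every neighbourhood of $y$ contains all but finitely many points of $A\}$. Zero-set: $g^{-1}(0)$, $g\in C(X)$; cozero-set: its complement. A cover $\mathcal U$ of $X$ always means $X=\bigcup\mathcal U$, $X\notin\mathcal U$; $\omega$-cover: every finite subset lies in a member; $\gamma$-cover: infinite, each point in all but finitely many members. $\Omega$: open $\omega$-covers. $\Gamma_F$: $\gamma$-covers $\mathcal U$ of $X$ by cozero-sets for which there are zero-sets $F(U)\subseteq U$ ($U\in\mathcal U$) with $\{F(U):U\in\mathcal U\}$ a $\gamma$-cover of $X$. $S_{fin}(\mathcal A,\mathcal B)$: for every sequence $(A_n)$ from $\mathcal A$ there are finite $B_n\subseteq A_n$ with $\bigcup_nB_n\in\mathcal B$. *)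

theory Defs
  imports "HOL-Analysis.Analysis"
begin

definition tychonoff_space :: "'a topology \<Rightarrow> bool" where
  "tychonoff_space X \<longleftrightarrow> completely_regular_space X \<and> t1_space X"

text \<open>C(X): continuous real functions on X, represented extensionally
  (value undefined outside the underlying set).\<close>
definition Cfun :: "'a topology \<Rightarrow> ('a \<Rightarrow> real) set" where
  "Cfun X = {f \<in> topspace X \<rightarrow>\<^sub>E UNIV. continuous_map X euclideanreal f}"

definition Cp :: "'a topology \<Rightarrow> ('a \<Rightarrow> real) topology" where
  "Cp X = subtopology (product_topology (\<lambda>_. euclideanreal) (topspace X)) (Cfun X)"

definition Omega_at :: "'b topology \<Rightarrow> 'b \<Rightarrow> 'b set set" where
  "Omega_at Y y = {A. A \<subseteq> topspace Y \<and> y \<in> Y closure_of A \<and> y \<notin> A}"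

definition Gamma_at :: "'b topology \<Rightarrow> 'b \<Rightarrow> 'b set set" where
  "Gamma_at Y y = {A. A \<subseteq> topspace Y \<and> infinite A \<and> y \<notin> A \<and>
      (\<forall>U. openin Y U \<and> y \<in> U \<longrightarrow> finite (A - U))}"

definition S_fin :: "'c set set \<Rightarrow> 'c set set \<Rightarrow> bool" where
  "S_fin \<A> \<B> \<longleftrightarrow> (\<forall>A :: nat \<Rightarrow> 'c set. (\<forall>n. A n \<in> \<A>) \<longrightarrow>
      (\<exists>B :: nat \<Rightarrow> 'c set. (\<forall>n. finite (B n) \<and> B n \<subseteq> A n) \<and> (\<Union>n. B n) \<in> \<B>))"

definition zero_set :: "'a topology \<Rightarrow> 'a set \<Rightarrow> bool" where
  "zero_set X Z \<longleftrightarrow> (\<exists>g. continuous_map X euclideanreal g \<and> Z = {x \<in> topspace X. g x = 0})"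

definition cozero_set :: "'a topology \<Rightarrow> 'a set \<Rightarrow> bool" where
  "cozero_set X U \<longleftrightarrow> (\<exists>g. continuous_map X euclideanreal g \<and> U = {x \<in> topspace X. g x \<noteq> 0})"

definition is_cover :: "'a topology \<Rightarrow> 'a set set \<Rightarrow> bool" where
  "is_cover X \<U> \<longleftrightarrow> \<Union>\<U> = topspace X \<and> topspace X \<notin> \<U>"

definition omega_cover :: "'a topology \<Rightarrow> 'a set set \<Rightarrow> bool" where
  "omega_cover X \<U> \<longleftrightarrow> is_cover X \<U> \<and>
     (\<forall>F. finite F \<and> F \<subseteq> topspace X \<longrightarrow> (\<exists>U\<in>\<U>. F \<subseteq> U))"

definition gamma_cover :: "'a topology \<Rightarrow> 'a set set \<Rightarrow> bool" where
  "gamma_cover X \<U> \<longleftrightarrow> is_cover X \<U> \<and> infinite \<U> \<and>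
     (\<forall>x\<in>topspace X. finite {U \<in> \<U>. x \<notin> U})"

definition Omega_cov :: "'a topology \<Rightarrow> 'a set set set" where
  "Omega_cov X = {\<U>. omega_cover X \<U> \<and> (\<forall>U\<in>\<U>. openin X U)}"

definition Gamma_F :: "'a topology \<Rightarrow> 'a set set set" where
  "Gamma_F X = {\<U>. gamma_cover X \<U> \<and> (\<forall>U\<in>\<U>. cozero_set X U) \<and>
     (\<exists>F. (\<forall>U\<in>\<U>. zero_set X (F U) \<and> F U \<subseteq> U) \<and> gamma_cover X (F ` \<U>))}"

end

theory Submission imports Defs begin

lemma topspace_Cp: "topspace (Cp X) = Cfun X"
  unfolding Cp_def Cfun_def by (auto simp: topspace_product_topology)

lemma Cfun_cont: "g \<in> Cfun X \<Longrightarrow> continuous_map X euclideanreal g"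
  by (simp add: Cfun_def)

lemma open_nbhd:
  assumes "x \<in> topspace X"
  shows "openin (Cp X) {h \<in> Cfun X. \<bar>h x - c\<bar> < e}"
proof -
  let ?P = "product_topology (\<lambda>_. euclideanreal) (topspace X)"
  have "openin ?P {h \<in> topspace ?P. h x \<in> ball c e}"
    by (rule openin_continuous_map_preimage[OF continuous_map_product_projection[OF assms]]) auto
  moreover have "{h \<in> Cfun X. \<bar>h x - c\<bar> < e} = {h \<in> topspace ?P. h x \<in> ball c e} \<inter> Cfun X"
    using topspace_Cp[of X] unfolding Cp_def by (auto simp: dist_real_def abs_minus_commute)
  ultimately show ?thesis unfolding Cp_def by (auto simp: openin_subtopology)
qed

lemma box_open:
  assumes "finite F" "F \<subseteq> topspace X"
  shows "openin (Cp X) {h \<in> Cfun X. \<forall>x\<in>F. \<bar>h x - f x\<bar> < e}"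
  using assms
proof (induction F)
  case empty
  then show ?case using openin_topspace[of "Cp X"] by (simp add: topspace_Cp)
next
  case (insert a F)
  have "{h \<in> Cfun X. \<forall>x\<in>insert a F. \<bar>h x - f x\<bar> < e} =
        {h \<in> Cfun X. \<bar>h a - f a\<bar> < e} \<inter> {h \<in> Cfun X. \<forall>x\<in>F. \<bar>h x - f x\<bar> < e}" by auto
  then show ?case using insert open_nbhd[of a X "f a" e] by (simp add: openin_Int)
qed

lemma box_sub:
  assumes "openin (Cp X) W" "f \<in> W"
  shows "\<exists>F e. finite F \<and> F \<subseteq> topspace X \<and> e > 0 \<and> {h \<in> Cfun X. \<forall>x\<in>F. \<bar>h x - f x\<bar> < e} \<subseteq> W"
proof -
  let ?P = "product_topology (\<lambda>_. euclideanreal) (topspace X)"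
  obtain T where T: "openin ?P T" "W = T \<inter> Cfun X"
    using assms(1) unfolding Cp_def by (auto simp: openin_subtopology)
  then obtain U where U: "finite {i \<in> topspace X. U i \<noteq> UNIV}" "\<forall>i\<in>topspace X. open (U i)"
    "f \<in> Pi\<^sub>E (topspace X) U" "Pi\<^sub>E (topspace X) U \<subseteq> T"
    using assms(2) unfolding openin_product_topology_alt by fastforce
  define F where "F = {i \<in> topspace X. U i \<noteq> UNIV}"
  have "\<forall>i\<in>F. \<exists>r>0. ball (f i) r \<subseteq> U i"
    using U unfolding F_def by (auto simp: open_contains_ball PiE_iff)
  then obtain r where r: "\<forall>i\<in>F. r i > 0 \<and> ball (f i) (r i) \<subseteq> U i" by metis
  define e where "e = Min (insert 1 (r ` F))"
  have fin: "finite F" using U(1) F_def by simp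
  have e0: "e > 0" unfolding e_def using fin r by auto
  have ele: "\<forall>i\<in>F. e \<le> r i" unfolding e_def using fin by auto
  have "{h \<in> Cfun X. \<forall>x\<in>F. \<bar>h x - f x\<bar> < e} \<subseteq> W"
  proof
    fix h assume h: "h \<in> {h \<in> Cfun X. \<forall>x\<in>F. \<bar>h x - f x\<bar> < e}"
    have "h \<in> Pi\<^sub>E (topspace X) U"
    proof -
      have "h \<in> topspace X \<rightarrow>\<^sub>E UNIV" using h by (simp add: Cfun_def)
      moreover have "h i \<in> U i" if "i \<in> topspace X" for i
      proof (cases "i \<in> F")
        case True
        then have "h i \<in> ball (f i) (r i)" using h ele by (force simp: dist_real_def abs_minus_commute)
        then show ?thesis using r True by (meson mem_ball subsetD)
      next
        case False then show ?thesis using that F_def by auto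
      qed
      ultimately show ?thesis by (auto simp: PiE_iff)
    qed
    then show "h \<in> W" using h T U by auto
  qed
  then show ?thesis using fin e0 F_def by (intro exI[of _ F] exI[of _ e]) auto
qed


lemma fin_bad:
  assumes "A \<in> Gamma_at (Cp X) f" "f \<in> Cfun X" "x \<in> topspace X" "d > 0"
  shows "finite {g \<in> A. \<not> \<bar>g x - f x\<bar> < d}"
proof -
  have "finite (A - {h \<in> Cfun X. \<bar>h x - f x\<bar> < d})"
    using assms open_nbhd[OF assms(3), of "f x" d] unfolding Gamma_at_def by auto
  moreover have "{g \<in> A. \<not> \<bar>g x - f x\<bar> < d} \<subseteq> A - {h \<in> Cfun X. \<bar>h x - f x\<bar> < d}" by auto
  ultimately show ?thesis by (rule finite_subset[rotated])
qed

lemma pigeon: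
  assumes "finite (h ` S)" "infinite S"
  shows "\<exists>y. infinite {x\<in>S. h x = y}"
proof (rule ccontr)
  assume "\<nexists>y. infinite {x \<in> S. h x = y}"
  then have "finite (\<Union>y\<in>h ` S. {x\<in>S. h x = y})" using assms(1) by (intro finite_UN_I) auto
  moreover have "S = (\<Union>y\<in>h ` S. {x\<in>S. h x = y})" by auto
  ultimately show False using assms(2) by simp
qed

lemma cozero_open: "cozero_set X U \<Longrightarrow> openin X U"
proof -
  assume "cozero_set X U"
  then obtain g where g: "continuous_map X euclideanreal g" "U = {x \<in> topspace X. g x \<noteq> 0}"
    unfolding cozero_set_def by auto
  have "openin X {x \<in> topspace X. g x \<in> -{0}}"
    by (rule openin_continuous_map_preimage[OF g(1)]) auto
  then show ?thesis using g(2) by simp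
qed

lemma sep_fun:
  assumes "zero_set X Z" "cozero_set X U" "Z \<subseteq> U"
  shows "\<exists>\<phi>\<in>Cfun X. (\<forall>x\<in>topspace X. \<phi> x = 0 \<longleftrightarrow> x \<in> Z) \<and> (\<forall>x\<in>topspace X. x \<notin> U \<longrightarrow> \<phi> x = 1)"
proof -
  obtain k where k: "continuous_map X euclideanreal k" "Z = {x \<in> topspace X. k x = 0}"
    using assms(1) unfolding zero_set_def by auto
  obtain h where h: "continuous_map X euclideanreal h" "U = {x \<in> topspace X. h x \<noteq> 0}"
    using assms(2) unfolding cozero_set_def by auto
  have nz: "\<bar>k x\<bar> + \<bar>h x\<bar> \<noteq> 0" if "x \<in> topspace X" for x
    using that assms(3) k h by auto
  define \<phi> where "\<phi> = restrict (\<lambda>x. \<bar>k x\<bar> / (\<bar>k x\<bar> + \<bar>h x\<bar>)) (topspace X)"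
  have "continuous_map X euclideanreal (\<lambda>x. \<bar>k x\<bar> / (\<bar>k x\<bar> + \<bar>h x\<bar>))"
    using k h nz by (intro continuous_intros) auto
  then have "continuous_map X euclideanreal \<phi>"
    unfolding \<phi>_def by (rule continuous_map_eq) auto
  then have "\<phi> \<in> Cfun X" unfolding Cfun_def \<phi>_def by auto
  moreover have "\<forall>x\<in>topspace X. \<phi> x = 0 \<longleftrightarrow> x \<in> Z"
  proof
    fix x assume x: "x \<in> topspace X"
    have "\<phi> x = \<bar>k x\<bar> / (\<bar>k x\<bar> + \<bar>h x\<bar>)" using x unfolding \<phi>_def by simp
    then show "\<phi> x = 0 \<longleftrightarrow> x \<in> Z" using nz[OF x] x k(2) by auto
  qed
  moreover have "\<forall>x\<in>topspace X. x \<notin> U \<longrightarrow> \<phi> x = 1"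
  proof (intro ballI impI)
    fix x assume x: "x \<in> topspace X" "x \<notin> U"
    have "\<phi> x = \<bar>k x\<bar> / (\<bar>k x\<bar> + \<bar>h x\<bar>)" using x unfolding \<phi>_def by simp
    then show "\<phi> x = 1" using nz[OF x(1)] x h(2) by auto
  qed
  ultimately show ?thesis by blast
qed


definition zf :: "'a topology \<Rightarrow> 'a \<Rightarrow> real" where
  "zf X = restrict (\<lambda>_. 0) (topspace X)"

lemma zf_Cfun: "zf X \<in> Cfun X"
proof -
  have "continuous_map X euclideanreal (zf X)"
    unfolding zf_def by (rule continuous_map_eq[of _ _ "\<lambda>_. 0"]) auto
  then show ?thesis unfolding Cfun_def zf_def by auto
qed

lemma gammaF_to_fun:
  assumes "\<U> \<in> Gamma_F X"
  shows "\<exists>A \<psi>. A \<in> Gamma_at (Cp X) (zf X) \<and>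
     (\<forall>\<phi>\<in>A. \<psi> \<phi> \<in> \<U> \<and> (\<forall>x\<in>topspace X. \<bar>\<phi> x\<bar> < 1 \<longrightarrow> x \<in> \<psi> \<phi>))"
proof -
  obtain F where gU: "gamma_cover X \<U>" and coz: "\<forall>U\<in>\<U>. cozero_set X U"
    and F: "\<forall>U\<in>\<U>. zero_set X (F U) \<and> F U \<subseteq> U" and gF: "gamma_cover X (F ` \<U>)"
    using assms unfolding Gamma_F_def by auto
  define \<V> where "\<V> = F ` \<U>"
  define s where "s = inv_into \<U> F"
  have sV: "\<And>V. V \<in> \<V> \<Longrightarrow> s V \<in> \<U> \<and> F (s V) = V"
    unfolding s_def \<V>_def by (auto simp: inv_into_into f_inv_into_f)
  have Utop: "\<And>U. U \<in> \<U> \<Longrightarrow> U \<subseteq> topspace X \<and> U \<noteq> topspace X"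
    using gU unfolding gamma_cover_def is_cover_def by auto
  have ex: "\<And>V. V \<in> \<V> \<Longrightarrow> \<exists>\<phi>\<in>Cfun X. (\<forall>x\<in>topspace X. \<phi> x = 0 \<longleftrightarrow> x \<in> V) \<and> (\<forall>x\<in>topspace X. x \<notin> s V \<longrightarrow> \<phi> x = 1)"
  proof -
    fix V assume V: "V \<in> \<V>"
    have 1: "s V \<in> \<U>" "F (s V) = V" using sV[OF V] by auto
    have "zero_set X V" "V \<subseteq> s V" using F 1 by auto
    moreover have "cozero_set X (s V)" using coz 1 by auto
    ultimately show "?thesis V" using sep_fun[of X V "s V"] by blast
  qed
  define P where "P V \<phi> \<longleftrightarrow> \<phi>\<in>Cfun X \<and> (\<forall>x\<in>topspace X. \<phi> x = 0 \<longleftrightarrow> x \<in> V) \<and> (\<forall>x\<in>topspace X. x \<notin> s V \<longrightarrow> \<phi> x = 1)" for V \<phi>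
  define \<Phi> where "\<Phi> V = (SOME \<phi>. P V \<phi>)" for V
  have \<Phi>: "\<And>V. V \<in> \<V> \<Longrightarrow> \<Phi> V \<in>Cfun X \<and> (\<forall>x\<in>topspace X. \<Phi> V x = 0 \<longleftrightarrow> x \<in> V) \<and> (\<forall>x\<in>topspace X. x \<notin> s V \<longrightarrow> \<Phi> V x = 1)"
  proof -
    fix V assume V: "V \<in> \<V>"
    have "\<exists>\<phi>. P V \<phi>" using ex[OF V] unfolding P_def by blast
    then have "P V (\<Phi> V)" unfolding \<Phi>_def by (rule someI_ex)
    then show "?thesis V" unfolding P_def .
  qed
  have Vtop: "\<And>V. V \<in> \<V> \<Longrightarrow> V \<subseteq> topspace X \<and> V \<subseteq> s V"
  proof -
    fix V assume V: "V \<in> \<V>"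
    have 1: "s V \<in> \<U>" "F (s V) = V" using sV[OF V] by auto
    then show "V \<subseteq> topspace X \<and> V \<subseteq> s V" using F Utop[OF 1(1)] by force
  qed
  have inj: "inj_on \<Phi> \<V>"
  proof (rule inj_onI)
    fix V W assume V: "V \<in> \<V>" and W: "W \<in> \<V>" and eq: "\<Phi> V = \<Phi> W"
    have "V = {x \<in> topspace X. \<Phi> V x = 0}" using \<Phi>[OF V] Vtop[OF V] by auto
    also have "\<dots> = W" using \<Phi>[OF W] Vtop[OF W] eq by auto
    finally show "V = W" .
  qed
  define A where "A = \<Phi> ` \<V>"
  define \<psi> where "\<psi> \<phi> = s (inv_into \<V> \<Phi> \<phi>)" for \<phi>
  have finx: "\<And>x. x \<in> topspace X \<Longrightarrow> finite {V \<in> \<V>. x \<notin> V}"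
    using gF unfolding gamma_cover_def \<V>_def by auto
  have "A \<in> Gamma_at (Cp X) (zf X)"
    unfolding Gamma_at_def
  proof (intro CollectI conjI allI impI)
    show "A \<subseteq> topspace (Cp X)" unfolding topspace_Cp A_def using \<Phi> by auto
    show "infinite A" unfolding A_def using inj gF finite_image_iff[OF inj]
      unfolding gamma_cover_def \<V>_def by auto
    show "zf X \<notin> A"
    proof
      assume "zf X \<in> A"
      then obtain V where V: "V \<in> \<V>" "\<Phi> V = zf X" unfolding A_def by auto
      then have "topspace X \<subseteq> V" using \<Phi>[OF V(1)] unfolding zf_def by auto
      then show False using Vtop[OF V(1)] Utop[of "s V"] sV[OF V(1)] by auto
    qed
    fix O' assume O': "openin (Cp X) O' \<and> zf X \<in> O'"
    then obtain G e where G: "finite G" "G \<subseteq> topspace X" "e > 0"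
      and sub: "{h \<in> Cfun X. \<forall>x\<in>G. \<bar>h x - zf X x\<bar> < e} \<subseteq> O'"
      using box_sub[of X O' "zf X"] O' by auto
    have "A - O' \<subseteq> \<Phi> ` (\<Union>x\<in>G. {V \<in> \<V>. x \<notin> V})"
    proof
      fix \<phi> assume "\<phi> \<in> A - O'"
      then obtain V where V: "V \<in> \<V>" "\<phi> = \<Phi> V" "\<phi> \<notin> O'" unfolding A_def by auto
      then obtain x where x: "x \<in> G" "\<not> \<bar>\<phi> x - zf X x\<bar> < e" using sub \<Phi>[OF V(1)] by blast
      then have "\<phi> x \<noteq> 0" using G(2) \<open>e > 0\<close> unfolding zf_def by auto
      then have "x \<notin> V" using \<Phi>[OF V(1)] V(2) x G(2) by auto
      then show "\<phi> \<in> \<Phi> ` (\<Union>x\<in>G. {V \<in> \<V>. x \<notin> V})" using V x by auto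
    qed
    moreover have "finite (\<Phi> ` (\<Union>x\<in>G. {V \<in> \<V>. x \<notin> V}))" using G finx by auto
    ultimately show "finite (A - O')" by (rule finite_subset)
  qed
  moreover have "\<forall>\<phi>\<in>A. \<psi> \<phi> \<in> \<U> \<and> (\<forall>x\<in>topspace X. \<bar>\<phi> x\<bar> < 1 \<longrightarrow> x \<in> \<psi> \<phi>)"
  proof
    fix \<phi> assume "\<phi> \<in> A"
    then obtain V where V: "V \<in> \<V>" "\<phi> = \<Phi> V" unfolding A_def by auto
    have "\<psi> \<phi> = s V" unfolding \<psi>_def V(2) using inj V(1) by simp
    then show "\<psi> \<phi> \<in> \<U> \<and> (\<forall>x\<in>topspace X. \<bar>\<phi> x\<bar> < 1 \<longrightarrow> x \<in> \<psi> \<phi>)"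
      using sV[OF V(1)] \<Phi>[OF V(1)] V(2) by force
  qed
  ultimately show ?thesis by blast
qed


lemma fun_to_gammaF:
  assumes A: "A \<in> Gamma_at (Cp X) f" and f: "f \<in> Cfun X" and e: "e > 0"
    and nt: "\<forall>g\<in>A. {x\<in>topspace X. \<bar>g x - f x\<bar> < e} \<noteq> topspace X"
  shows "(\<lambda>g. {x\<in>topspace X. \<bar>g x - f x\<bar> < e}) ` A \<in> Gamma_F X"
proof -
  define U where "U g = {x\<in>topspace X. \<bar>g x - f x\<bar> < e}" for g
  define Z where "Z g = {x\<in>topspace X. \<bar>g x - f x\<bar> \<le> e/2}" for g
  define \<U> where "\<U> = U ` A"
  have Ainf: "infinite A" and ACf: "A \<subseteq> Cfun X" using A unfolding Gamma_at_def topspace_Cp by auto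
  have fcont: "continuous_map X euclideanreal f" using f by (simp add: Cfun_def)
  have gcont: "\<And>g. g \<in> A \<Longrightarrow> continuous_map X euclideanreal g" using ACf by (auto simp: Cfun_def)
  have bad: "\<And>x d. x \<in> topspace X \<Longrightarrow> d > 0 \<Longrightarrow> finite {g \<in> A. \<not> \<bar>g x - f x\<bar> < d}"
    using fin_bad[OF A f] by blast
  have Usub: "\<And>g. U g \<subseteq> topspace X" unfolding U_def by auto
  have Unt: "\<And>W. W \<in> \<U> \<Longrightarrow> W \<noteq> topspace X" using nt unfolding \<U>_def U_def by auto
  have finU: "\<And>x. x \<in> topspace X \<Longrightarrow> finite {W \<in> \<U>. x \<notin> W}"
  proof -
    fix x assume x: "x \<in> topspace X"
    have "{W \<in> \<U>. x \<notin> W} \<subseteq> U ` {g \<in> A. \<not> \<bar>g x - f x\<bar> < e}" unfolding \<U>_def U_def using x by auto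
    then show "finite {W \<in> \<U>. x \<notin> W}" using bad[OF x e] by (meson finite_surj)
  qed
  have Uinf: "infinite \<U>"
  proof
    assume fin: "finite \<U>"
    then obtain W where W: "infinite {g \<in> A. U g = W}" using pigeon[of U A] Ainf unfolding \<U>_def by auto
    then obtain g0 where "g0 \<in> A" "U g0 = W" by (metis (mono_tags, lifting) empty_Collect_eq finite.emptyI)
    then have "W \<in> \<U>" unfolding \<U>_def by auto
    then obtain x where x: "x \<in> topspace X" "x \<notin> W" using Unt Usub \<open>U g0 = W\<close> by blast
    have "{g \<in> A. U g = W} \<subseteq> {g \<in> A. \<not> \<bar>g x - f x\<bar> < e}" using x unfolding U_def by auto
    then show False using W bad[OF x(1) e] finite_subset by blast
  qed
  have gU: "gamma_cover X \<U>"
    unfolding gamma_cover_def is_cover_def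
  proof (intro conjI ballI)
    show "\<Union>\<U> = topspace X"
    proof
      show "\<Union>\<U> \<subseteq> topspace X" using Usub unfolding \<U>_def by auto
      show "topspace X \<subseteq> \<Union>\<U>"
      proof
        fix x assume x: "x \<in> topspace X"
        then have "{g \<in> A. \<not> \<bar>g x - f x\<bar> < e} \<noteq> A" using bad[OF x e] Ainf by auto
        then obtain g where "g \<in> A" "\<bar>g x - f x\<bar> < e" by auto
        then show "x \<in> \<Union>\<U>" unfolding \<U>_def U_def using x by auto
      qed
    qed
    show "topspace X \<notin> \<U>" using Unt by auto
    show "infinite \<U>" by (rule Uinf)
    fix x assume "x \<in> topspace X" then show "finite {W \<in> \<U>. x \<notin> W}" by (rule finU)
  qed
  have coz: "\<forall>W\<in>\<U>. cozero_set X W"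
  proof
    fix W assume "W \<in> \<U>"
    then obtain g where g: "g \<in> A" "W = U g" unfolding \<U>_def by auto
    have "continuous_map X euclideanreal (\<lambda>x. max 0 (e - \<bar>g x - f x\<bar>))"
      using gcont[OF g(1)] fcont by (intro continuous_intros) auto
    moreover have "W = {x \<in> topspace X. max 0 (e - \<bar>g x - f x\<bar>) \<noteq> 0}"
      unfolding g(2) U_def by auto
    ultimately show "cozero_set X W" unfolding cozero_set_def by blast
  qed
  define \<sigma> where "\<sigma> W = (SOME g. g \<in> A \<and> U g = W)" for W
  have \<sigma>: "\<And>W. W \<in> \<U> \<Longrightarrow> \<sigma> W \<in> A \<and> U (\<sigma> W) = W"
  proof -
    fix W assume "W \<in> \<U>"
    then have "\<exists>g. g \<in> A \<and> U g = W" unfolding \<U>_def by auto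
    then show "\<sigma> W \<in> A \<and> U (\<sigma> W) = W" unfolding \<sigma>_def by (rule someI_ex)
  qed
  define Fm where "Fm W = Z (\<sigma> W)" for W
  have ZU: "\<And>g. Z g \<subseteq> U g" unfolding Z_def U_def using e by auto
  have Fz: "\<forall>W\<in>\<U>. zero_set X (Fm W) \<and> Fm W \<subseteq> W"
  proof
    fix W assume W: "W \<in> \<U>"
    have "continuous_map X euclideanreal (\<lambda>x. max 0 (\<bar>\<sigma> W x - f x\<bar> - e/2))"
      using gcont \<sigma>[OF W] fcont by (intro continuous_intros) auto
    moreover have "Fm W = {x \<in> topspace X. max 0 (\<bar>\<sigma> W x - f x\<bar> - e/2) = 0}"
      unfolding Fm_def Z_def by (auto simp: max_def split: if_splits)
    ultimately have "zero_set X (Fm W)" unfolding zero_set_def by blast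
    moreover have "Fm W \<subseteq> W" unfolding Fm_def using ZU \<sigma>[OF W] by blast
    ultimately show "zero_set X (Fm W) \<and> Fm W \<subseteq> W" by blast
  qed
  have finF: "\<And>x. x \<in> topspace X \<Longrightarrow> finite {W \<in> \<U>. x \<notin> Fm W}"
  proof -
    fix x assume x: "x \<in> topspace X"
    have "{W \<in> \<U>. x \<notin> Fm W} \<subseteq> U ` {g \<in> A. \<not> \<bar>g x - f x\<bar> < e/2}"
    proof
      fix W assume W: "W \<in> {W \<in> \<U>. x \<notin> Fm W}"
      then have "\<sigma> W \<in> A" "U (\<sigma> W) = W" "\<not> \<bar>\<sigma> W x - f x\<bar> < e/2"
        using \<sigma> x unfolding Fm_def Z_def by auto
      then show "W \<in> U ` {g \<in> A. \<not> \<bar>g x - f x\<bar> < e/2}" by force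
    qed
    moreover have "finite (U ` {g \<in> A. \<not> \<bar>g x - f x\<bar> < e/2})" using bad[OF x, of "e/2"] e by (intro finite_imageI) simp
    ultimately show "finite {W \<in> \<U>. x \<notin> Fm W}" by (rule finite_subset)
  qed
  have Fsub: "\<And>W. W \<in> \<U> \<Longrightarrow> Fm W \<subseteq> topspace X" unfolding Fm_def Z_def by auto
  have gF: "gamma_cover X (Fm ` \<U>)"
    unfolding gamma_cover_def is_cover_def
  proof (intro conjI ballI)
    show "\<Union>(Fm ` \<U>) = topspace X"
    proof
      show "\<Union>(Fm ` \<U>) \<subseteq> topspace X" using Fsub by auto
      show "topspace X \<subseteq> \<Union>(Fm ` \<U>)"
      proof
        fix x assume x: "x \<in> topspace X"
        then have "{W \<in> \<U>. x \<notin> Fm W} \<noteq> \<U>" using finF[OF x] Uinf by auto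
        then obtain W where "W \<in> \<U>" "x \<in> Fm W" by auto
        then show "x \<in> \<Union>(Fm ` \<U>)" by auto
      qed
    qed
    show "topspace X \<notin> Fm ` \<U>"
    proof
      assume "topspace X \<in> Fm ` \<U>"
      then obtain W where W: "W \<in> \<U>" "Fm W = topspace X" by auto
      then show False using Fz Unt[OF W(1)] Usub \<sigma>[OF W(1)] by blast
    qed
    show "infinite (Fm ` \<U>)"
    proof
      assume fin: "finite (Fm ` \<U>)"
      then obtain V where V: "infinite {W \<in> \<U>. Fm W = V}" using pigeon[of Fm \<U>] Uinf by auto
      then obtain W0 where W0: "W0 \<in> \<U>" "Fm W0 = V" by (metis (mono_tags, lifting) empty_Collect_eq finite.emptyI)
      have "V \<noteq> topspace X" using W0 Fz Unt[OF W0(1)] Usub \<sigma>[OF W0(1)] by blast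
      then obtain x where x: "x \<in> topspace X" "x \<notin> V" using Fsub[OF W0(1)] W0(2) by blast
      have "{W \<in> \<U>. Fm W = V} \<subseteq> {W \<in> \<U>. x \<notin> Fm W}" using x by auto
      then show False using V finF[OF x(1)] finite_subset by blast
    qed
    fix x assume x: "x \<in> topspace X"
    have "{V \<in> Fm ` \<U>. x \<notin> V} = Fm ` {W \<in> \<U>. x \<notin> Fm W}" by auto
    then show "finite {V \<in> Fm ` \<U>. x \<notin> V}" using finF[OF x] by simp
  qed
  have "\<U> \<in> Gamma_F X" unfolding Gamma_F_def using gU coz Fz gF by blast
  then show ?thesis unfolding \<U>_def U_def .
qed


lemma dir12:
  assumes H: "\<forall>f \<in> Cfun X. S_fin (Gamma_at (Cp X) f) (Omega_at (Cp X) f)"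
  shows "S_fin (Gamma_F X) (Omega_cov X)"
  unfolding S_fin_def
proof (intro allI impI)
  fix \<U> :: "nat \<Rightarrow> 'a set set"
  assume U: "\<forall>n. \<U> n \<in> Gamma_F X"
  have exP: "\<And>n. \<exists>A\<psi>. fst A\<psi> \<in> Gamma_at (Cp X) (zf X) \<and>
     (\<forall>\<phi>\<in>fst A\<psi>. snd A\<psi> \<phi> \<in> \<U> n \<and> (\<forall>x\<in>topspace X. \<bar>\<phi> x\<bar> < 1 \<longrightarrow> x \<in> snd A\<psi> \<phi>))"
  proof -
    fix n
    obtain A \<psi> where "A \<in> Gamma_at (Cp X) (zf X) \<and>
     (\<forall>\<phi>\<in>A. \<psi> \<phi> \<in> \<U> n \<and> (\<forall>x\<in>topspace X. \<bar>\<phi> x\<bar> < 1 \<longrightarrow> x \<in> \<psi> \<phi>))"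
      using gammaF_to_fun[OF U[rule_format, of n]] by (elim exE)
    then show "\<exists>A\<psi>. fst A\<psi> \<in> Gamma_at (Cp X) (zf X) \<and>
     (\<forall>\<phi>\<in>fst A\<psi>. snd A\<psi> \<phi> \<in> \<U> n \<and> (\<forall>x\<in>topspace X. \<bar>\<phi> x\<bar> < 1 \<longrightarrow> x \<in> snd A\<psi> \<phi>))"
      by (intro exI[of _ "(A, \<psi>)"]) simp
  qed
  define P where "P n = (SOME A\<psi>. fst A\<psi> \<in> Gamma_at (Cp X) (zf X) \<and>
     (\<forall>\<phi>\<in>fst A\<psi>. snd A\<psi> \<phi> \<in> \<U> n \<and> (\<forall>x\<in>topspace X. \<bar>\<phi> x\<bar> < 1 \<longrightarrow> x \<in> snd A\<psi> \<phi>)))" for n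
  have P: "\<And>n. fst (P n) \<in> Gamma_at (Cp X) (zf X) \<and>
     (\<forall>\<phi>\<in>fst (P n). snd (P n) \<phi> \<in> \<U> n \<and> (\<forall>x\<in>topspace X. \<bar>\<phi> x\<bar> < 1 \<longrightarrow> x \<in> snd (P n) \<phi>))"
    unfolding P_def by (rule someI_ex[OF exP])
  define A where "A n = fst (P n)" for n
  define \<psi> where "\<psi> n = snd (P n)" for n
  have A: "\<forall>n. A n \<in> Gamma_at (Cp X) (zf X)"
  proof
    fix n show "A n \<in> Gamma_at (Cp X) (zf X)" using P[of n] unfolding A_def by (rule conjunct1)
  qed
  have \<psi>: "\<And>n \<phi>. \<phi> \<in> A n \<Longrightarrow> \<psi> n \<phi> \<in> \<U> n \<and> (\<forall>x\<in>topspace X. \<bar>\<phi> x\<bar> < 1 \<longrightarrow> x \<in> \<psi> n \<phi>)"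
  proof -
    fix n \<phi> assume "\<phi> \<in> A n"
    then show "\<psi> n \<phi> \<in> \<U> n \<and> (\<forall>x\<in>topspace X. \<bar>\<phi> x\<bar> < 1 \<longrightarrow> x \<in> \<psi> n \<phi>)"
      using P[of n] unfolding A_def \<psi>_def by blast
  qed
  have "S_fin (Gamma_at (Cp X) (zf X)) (Omega_at (Cp X) (zf X))" using H zf_Cfun by blast
  then have "\<exists>B. (\<forall>n. finite (B n) \<and> B n \<subseteq> A n) \<and> (\<Union>n. B n) \<in> Omega_at (Cp X) (zf X)"
    using A unfolding S_fin_def by blast
  then obtain B where B: "\<forall>n. finite (B n) \<and> B n \<subseteq> A n" and cl: "(\<Union>n. B n) \<in> Omega_at (Cp X) (zf X)"
    by blast
  define W where "W n = \<psi> n ` B n" for n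
  have gc: "\<And>n. gamma_cover X (\<U> n)" using U unfolding Gamma_F_def by blast
  have cz: "\<And>n. \<forall>V\<in>\<U> n. cozero_set X V" using U unfolding Gamma_F_def by blast
  have memW: "\<And>V. V \<in> (\<Union>n. W n) \<Longrightarrow> \<exists>n. V \<in> \<U> n"
  proof -
    fix V assume "V \<in> (\<Union>n. W n)"
    then obtain n where "V \<in> \<psi> n ` B n" unfolding W_def by auto
    then obtain \<phi> where n: "\<phi> \<in> B n" "V = \<psi> n \<phi>" by auto
    then have "\<phi> \<in> A n" using B by blast
    then show "\<exists>n. V \<in> \<U> n" using \<psi>[of \<phi> n] n(2) by blast
  qed
  have omega: "\<And>G. finite G \<Longrightarrow> G \<subseteq> topspace X \<Longrightarrow> \<exists>V\<in>(\<Union>n. W n). G \<subseteq> V"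
  proof -
    fix G assume G: "finite G" "G \<subseteq> topspace X"
    have op: "openin (Cp X) {h \<in> Cfun X. \<forall>x\<in>G. \<bar>h x - zf X x\<bar> < 1}" by (rule box_open[OF G])
    have zin: "zf X \<in> {h \<in> Cfun X. \<forall>x\<in>G. \<bar>h x - zf X x\<bar> < 1}" using zf_Cfun by auto
    have "zf X \<in> Cp X closure_of (\<Union>n. B n)" using cl unfolding Omega_at_def by simp
    then have clo: "\<forall>T. zf X \<in> T \<and> openin (Cp X) T \<longrightarrow> (\<exists>y. y \<in> (\<Union>n. B n) \<and> y \<in> T)"
      unfolding in_closure_of by (rule conjunct2)
    have "\<exists>y. y \<in> (\<Union>n. B n) \<and> y \<in> {h \<in> Cfun X. \<forall>x\<in>G. \<bar>h x - zf X x\<bar> < 1}"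
      using clo[rule_format, OF conjI[OF zin op]] .
    then obtain \<phi> where \<phi>: "\<phi> \<in> (\<Union>n. B n)" "\<phi> \<in> {h \<in> Cfun X. \<forall>x\<in>G. \<bar>h x - zf X x\<bar> < 1}"
      by (elim exE conjE)
    then obtain n where n: "\<phi> \<in> B n" by (elim UN_E)
    have "\<forall>x\<in>G. \<bar>\<phi> x\<bar> < 1"
    proof
      fix x assume x: "x \<in> G"
      then have "zf X x = 0" using G(2) unfolding zf_def by auto
      then show "\<bar>\<phi> x\<bar> < 1" using \<phi>(2) x by auto
    qed
    moreover have "\<phi> \<in> A n" using n B by blast
    ultimately have "G \<subseteq> \<psi> n \<phi>" using \<psi>[of \<phi> n] G(2) by auto
    moreover have "\<psi> n \<phi> \<in> (\<Union>n. W n)" using n unfolding W_def by auto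
    ultimately show "\<exists>V\<in>(\<Union>n. W n). G \<subseteq> V" by blast
  qed
  have "(\<Union>n. W n) \<in> Omega_cov X"
    unfolding Omega_cov_def omega_cover_def is_cover_def
  proof (intro CollectI conjI allI impI ballI)
    show "\<Union>(\<Union>n. W n) = topspace X"
    proof
      show "\<Union>(\<Union>n. W n) \<subseteq> topspace X"
        using memW gc unfolding gamma_cover_def is_cover_def by blast
      show "topspace X \<subseteq> \<Union>(\<Union>n. W n)"
      proof
        fix x assume "x \<in> topspace X"
        then obtain V where "V \<in> (\<Union>n. W n)" "{x} \<subseteq> V" using omega[of "{x}"] by auto
        then show "x \<in> \<Union>(\<Union>n. W n)" by blast
      qed
    qed
    show "topspace X \<notin> (\<Union>n. W n)"
      using memW gc unfolding gamma_cover_def is_cover_def by blast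
    fix G assume "finite G \<and> G \<subseteq> topspace X"
    then show "\<exists>V\<in>(\<Union>n. W n). G \<subseteq> V" using omega by blast
  next
    fix V assume "V \<in> (\<Union>n. W n)"
    then show "openin X V" using memW cz cozero_open by blast
  qed
  moreover have "\<forall>n. finite (W n) \<and> W n \<subseteq> \<U> n" unfolding W_def using B \<psi> by blast
  ultimately show "\<exists>B. (\<forall>n. finite (B n) \<and> B n \<subseteq> \<U> n) \<and> (\<Union>n. B n) \<in> Omega_cov X" by blast
qed


lemma nat_big: "(e::real) > 0 \<Longrightarrow> \<exists>N::nat. 1 / (real N + 1) < e"
proof -
  assume e: "e > 0"
  obtain N :: nat where "1 / e < real N" using reals_Archimedean2 by blast
  then have "1 / e < real N + 1" by simp
  then have "1 < (real N + 1) * e" using e by (simp add: divide_less_eq mult.commute)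
  then show ?thesis using e by (intro exI[of _ N]) (simp add: divide_less_eq mult.commute)
qed

lemma le_inv: "(N::nat) \<le> n \<Longrightarrow> 1 / (real n + 1) \<le> 1 / (real N + 1)"
  by (simp add: frac_le)

lemma dir21:
  assumes H: "S_fin (Gamma_F X) (Omega_cov X)" and f: "f \<in> Cfun X"
  shows "S_fin (Gamma_at (Cp X) f) (Omega_at (Cp X) f)"
  unfolding S_fin_def
proof (intro allI impI)
  fix A :: "nat \<Rightarrow> ('a \<Rightarrow> real) set"
  assume A: "\<forall>n. A n \<in> Gamma_at (Cp X) f"
  have ACf: "\<And>n. A n \<subseteq> Cfun X" and fA: "\<And>n. f \<notin> A n"
    using A unfolding Gamma_at_def topspace_Cp by auto
  define Ug where "Ug n g = {x\<in>topspace X. \<bar>g x - f x\<bar> < 1 / (real n + 1)}" for n g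
  define Pn where "Pn n \<longleftrightarrow> (\<exists>g\<in>A n. Ug n g = topspace X)" for n
  have goalOK: "\<exists>B. (\<forall>n. finite (B n) \<and> B n \<subseteq> A n) \<and> (\<Union>n. B n) \<in> Omega_at (Cp X) f"
    if Bp: "\<forall>n. finite (B n) \<and> B n \<subseteq> A n"
    and cls: "\<And>F e. finite F \<Longrightarrow> F \<subseteq> topspace X \<Longrightarrow> e > 0 \<Longrightarrow>
        \<exists>g\<in>(\<Union>n. B n). \<forall>x\<in>F. \<bar>g x - f x\<bar> < e" for B
  proof -
    have "(\<Union>n. B n) \<in> Omega_at (Cp X) f"
      unfolding Omega_at_def
    proof (intro CollectI conjI)
      show "(\<Union>n. B n) \<subseteq> topspace (Cp X)" using Bp ACf unfolding topspace_Cp by blast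
      show "f \<notin> (\<Union>n. B n)" using Bp fA by blast
      show "f \<in> Cp X closure_of (\<Union>n. B n)"
        unfolding in_closure_of
      proof (intro conjI allI impI)
        show "f \<in> topspace (Cp X)" using f by (simp add: topspace_Cp)
        fix T assume T: "f \<in> T \<and> openin (Cp X) T"
        then obtain F e where Fe: "finite F" "F \<subseteq> topspace X" "e > 0"
          "{h \<in> Cfun X. \<forall>x\<in>F. \<bar>h x - f x\<bar> < e} \<subseteq> T"
          using box_sub[of X T f] by auto
        obtain g where g: "g \<in> (\<Union>n. B n)" "\<forall>x\<in>F. \<bar>g x - f x\<bar> < e" using cls[OF Fe(1-3)] by blast
        have "g \<in> Cfun X" using g(1) Bp ACf by blast
        then have "g \<in> T" using g(2) Fe(4) by blast
        then show "\<exists>y. y \<in> (\<Union>n. B n) \<and> y \<in> T" using g(1) by blast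
      qed
    qed
    then show ?thesis using Bp by blast
  qed
  show "\<exists>B. (\<forall>n. finite (B n) \<and> B n \<subseteq> A n) \<and> (\<Union>n. B n) \<in> Omega_at (Cp X) f"
  proof (cases "finite {n. Pn n}")
    case False
    define B where "B n = (if Pn n then {SOME g. g \<in> A n \<and> Ug n g = topspace X} else {})" for n
    have Bg: "\<And>n. Pn n \<Longrightarrow> (SOME g. g \<in> A n \<and> Ug n g = topspace X) \<in> A n \<and> Ug n (SOME g. g \<in> A n \<and> Ug n g = topspace X) = topspace X"
    proof -
      fix n assume "Pn n"
      then have "\<exists>g. g \<in> A n \<and> Ug n g = topspace X" unfolding Pn_def by blast
      then show "?thesis n" by (rule someI_ex)
    qed
    show ?thesis
    proof (rule goalOK)
      show "\<forall>n. finite (B n) \<and> B n \<subseteq> A n" unfolding B_def using Bg by auto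
      fix F e assume F: "finite F" "F \<subseteq> topspace X" and e: "(e::real) > 0"
      obtain N where N: "1 / (real N + 1) < e" using nat_big[OF e] by blast
      obtain n where n: "Pn n" "N \<le> n" using False infinite_nat_iff_unbounded_le by (metis mem_Collect_eq)
      define g where "g = (SOME g. g \<in> A n \<and> Ug n g = topspace X)"
      have "g \<in> B n" unfolding B_def g_def using n by simp
      moreover have "\<forall>x\<in>F. \<bar>g x - f x\<bar> < e"
      proof
        fix x assume "x \<in> F"
        then have "x \<in> Ug n g" using Bg[OF n(1)] F(2) unfolding g_def by auto
        then have "\<bar>g x - f x\<bar> < 1 / (real n + 1)" unfolding Ug_def by auto
        then show "\<bar>g x - f x\<bar> < e" using le_inv[OF n(2)] N by linarith
      qed
      ultimately show "\<exists>g\<in>(\<Union>n. B n). \<forall>x\<in>F. \<bar>g x - f x\<bar> < e" by blast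
    qed
  next
    case True
    then obtain n0 where n0: "\<And>n. n \<ge> n0 \<Longrightarrow> \<not> Pn n"
      by (metis finite_nat_set_iff_bounded_le mem_Collect_eq not_less_eq_eq le_trans)
    define \<U> where "\<U> k = Ug (k + n0) ` A (k + n0)" for k
    have UG: "\<forall>k. \<U> k \<in> Gamma_F X"
    proof
      fix k
      have "\<forall>g\<in>A (k+n0). {x\<in>topspace X. \<bar>g x - f x\<bar> < 1 / (real (k+n0) + 1)} \<noteq> topspace X"
        using n0[of "k+n0"] unfolding Pn_def Ug_def by auto
      then show "\<U> k \<in> Gamma_F X"
        unfolding \<U>_def Ug_def using fun_to_gammaF[OF A[rule_format] f] by simp
    qed
    then obtain W where W: "\<forall>k. finite (W k) \<and> W k \<subseteq> \<U> k" and Wc: "(\<Union>k. W k) \<in> Omega_cov X"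
      using H unfolding S_fin_def by blast
    define ch where "ch n V = (SOME g. g \<in> A n \<and> Ug n g = V)" for n V
    have ch: "\<And>k V. V \<in> W k \<Longrightarrow> ch (k+n0) V \<in> A (k+n0) \<and> Ug (k+n0) (ch (k+n0) V) = V"
    proof -
      fix k V assume "V \<in> W k"
      then have "V \<in> \<U> k" using W by blast
      then have "\<exists>g. g \<in> A (k+n0) \<and> Ug (k+n0) g = V" unfolding \<U>_def by auto
      then show "ch (k+n0) V \<in> A (k+n0) \<and> Ug (k+n0) (ch (k+n0) V) = V" unfolding ch_def by (rule someI_ex)
    qed
    define B where "B n = (if n0 \<le> n then ch n ` W (n - n0) else {})" for n
    have oc: "omega_cover X (\<Union>k. W k)" using Wc unfolding Omega_cov_def by blast
    have Wnt: "\<And>k V. V \<in> W k \<Longrightarrow> V \<noteq> topspace X \<and> V \<subseteq> topspace X"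
      using oc unfolding omega_cover_def is_cover_def by blast
    show ?thesis
    proof (rule goalOK)
      show "\<forall>n. finite (B n) \<and> B n \<subseteq> A n"
      proof
        fix n show "finite (B n) \<and> B n \<subseteq> A n"
        proof (cases "n0 \<le> n")
          case True
          then have "n - n0 + n0 = n" by simp
          have "ch n ` W (n - n0) \<subseteq> A n"
          proof
            fix g assume "g \<in> ch n ` W (n - n0)"
            then obtain V where V: "V \<in> W (n - n0)" "g = ch n V" by blast
            show "g \<in> A n" using ch[OF V(1)] V(2) \<open>n - n0 + n0 = n\<close> by simp
          qed
          then show ?thesis unfolding B_def using True W by simp
        next
          case False then show ?thesis unfolding B_def by simp
        qed
      qed
      fix F e assume F: "finite F" "F \<subseteq> topspace X" and e: "(e::real) > 0"
      obtain N where N: "1 / (real N + 1) < e" using nat_big[OF e] by blast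
      define W0 where "W0 = (\<Union>k\<le>N. W k)"
      have finW0: "finite W0" unfolding W0_def using W by auto
      have "\<forall>V\<in>W0. \<exists>x. x \<in> topspace X \<and> x \<notin> V" unfolding W0_def using Wnt by blast
      then obtain pt where pt: "\<forall>V\<in>W0. pt V \<in> topspace X \<and> pt V \<notin> V" by metis
      define G where "G = F \<union> pt ` W0"
      have G: "finite G" "G \<subseteq> topspace X" unfolding G_def using F finW0 pt by auto
      then obtain V where V: "V \<in> (\<Union>k. W k)" "G \<subseteq> V" using oc unfolding omega_cover_def by blast
      then obtain k where k: "V \<in> W k" by blast
      have "k > N"
      proof (rule ccontr)
        assume "\<not> k > N"
        then have "V \<in> W0" unfolding W0_def using k by auto
        then show False using pt V(2) unfolding G_def by blast
      qed
      define g where "g = ch (k+n0) V"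
      have "g \<in> B (k+n0)" unfolding B_def g_def using k by auto
      moreover have "\<forall>x\<in>F. \<bar>g x - f x\<bar> < e"
      proof
        fix x assume "x \<in> F"
        then have "x \<in> Ug (k+n0) g" using ch[OF k] V(2) unfolding g_def G_def by auto
        then have "\<bar>g x - f x\<bar> < 1 / (real (k+n0) + 1)" unfolding Ug_def by auto
        moreover have "N \<le> k + n0" using \<open>k > N\<close> by simp
        ultimately show "\<bar>g x - f x\<bar> < e" using le_inv[of N "k+n0"] N by linarith
      qed
      ultimately show "\<exists>g\<in>(\<Union>n. B n). \<forall>x\<in>F. \<bar>g x - f x\<bar> < e" by blast
    qed
  qed
qed

theorem mainTheorem7:
  fixes X :: "'a topology"
  assumes "tychonoff_space X"
  shows "(\<forall>f \<in> Cfun X. S_fin (Gamma_at (Cp X) f) (Omega_at (Cp X) f))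
         \<longleftrightarrow> S_fin (Gamma_F X) (Omega_cov X)"
  using dir12 dir21 by blast

end
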